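(* For any set $X$, the free left Ehresmann monoid $\mathrm{FLE}(X)$ on $X$ can be equipped with a unary operation $*$ making it a $*$-left Ehresmann monoid (with $a^*$ the least right identity of $a$ among the projections).
   Context: A left Ehresmann monoid is a monoid with a unary operation $a\mapsto a^+$ satisfying $x^+x=x$, $(x^+y^+)^+=x^+y^+$, $x^+y^+=y^+x^+$, $(xy)^+=(xy^+)^+$; these form a variety of algebras of type $(2,1,0)$, and $\mathrm{FLE}(X)$ is the free object on $X$ in it. Its projections are $E=\{a^+\}$. A $*$-left Ehresmann monoid is a monoid with two unary operations $+,*$ such that $(M,+)$ is left Ehresmann, $M$ satisfies $xx^*=x$, $(x^* )^*=x^*$, $x^*y^*=y^*x^*$, $(xy^* )^*y^*=(xy^* )^*$, and $(x^* )^+=x^*$, $(x^+)^*=x^+$. *)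

theory Defs
  imports Main
begin

datatype 'x trm = Var 'x | One | Mul "'x trm" "'x trm" | Plus "'x trm"

text \<open>Since the
  axiom rules are stated for arbitrary terms, this is closed under substitution.\<close>
inductive leq :: "'x trm \<Rightarrow> 'x trm \<Rightarrow> bool" where
  refl: "leq t t"
| sym: "leq s t \<Longrightarrow> leq t s"
| trans: "leq s t \<Longrightarrow> leq t u \<Longrightarrow> leq s u"
| cong_mul: "leq s s' \<Longrightarrow> leq t t' \<Longrightarrow> leq (Mul s t) (Mul s' t')"
| cong_plus: "leq s s' \<Longrightarrow> leq (Plus s) (Plus s')"
| assoc: "leq (Mul (Mul x y) z) (Mul x (Mul y z))"
| lunit: "leq (Mul One x) x"
| runit: "leq (Mul x One) x"
| ax1: "leq (Mul (Plus x) x) x"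
| ax2: "leq (Plus (Mul (Plus x) (Plus y))) (Mul (Plus x) (Plus y))"
| ax3: "leq (Mul (Plus x) (Plus y)) (Mul (Plus y) (Plus x))"
| ax4: "leq (Plus (Mul x y)) (Plus (Mul x (Plus y)))"

lemma equivp_leq: "equivp leq"
  by (intro equivpI reflpI sympI transpI) (auto intro: leq.intros)

text \<open>The free left Ehresmann monoid FLE(X) on X = UNIV :: 'x set.\<close>
quotient_type 'x fle = "'x trm" / leq
  by (rule equivp_leq)

lift_definition fle_mul :: "'x fle \<Rightarrow> 'x fle \<Rightarrow> 'x fle" is Mul
  by (rule leq.cong_mul)

lift_definition fle_one :: "'x fle" is One .

lift_definition fle_plus :: "'x fle \<Rightarrow> 'x fle" is Plus
  by (rule leq.cong_plus)

lift_definition fle_gen :: "'x \<Rightarrow> 'x fle" is Var .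

definition left_ehresmann :: "('a \<Rightarrow> 'a \<Rightarrow> 'a) \<Rightarrow> 'a \<Rightarrow> ('a \<Rightarrow> 'a) \<Rightarrow> bool" where
  "left_ehresmann m e p \<longleftrightarrow>
     (\<forall>x y z. m (m x y) z = m x (m y z)) \<and> (\<forall>x. m e x = x \<and> m x e = x) \<and>
     (\<forall>x. m (p x) x = x) \<and>
     (\<forall>x y. p (m (p x) (p y)) = m (p x) (p y)) \<and>
     (\<forall>x y. m (p x) (p y) = m (p y) (p x)) \<and>
     (\<forall>x y. p (m x y) = p (m x (p y)))"

definition star_left_ehresmann ::
  "('a \<Rightarrow> 'a \<Rightarrow> 'a) \<Rightarrow> 'a \<Rightarrow> ('a \<Rightarrow> 'a) \<Rightarrow> ('a \<Rightarrow> 'a) \<Rightarrow> bool" where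
  "star_left_ehresmann m e p s \<longleftrightarrow>
     left_ehresmann m e p \<and>
     (\<forall>x. m x (s x) = x) \<and>
     (\<forall>x. s (s x) = s x) \<and>
     (\<forall>x y. m (s x) (s y) = m (s y) (s x)) \<and>
     (\<forall>x y. m (s (m x (s y))) (s y) = s (m x (s y))) \<and>
     (\<forall>x. p (s x) = s x) \<and>
     (\<forall>x. s (p x) = p x)"

text \<open>Projections E = {a^+} and the natural order e \<le> f iff e = ef on them.\<close>
definition projections :: "('a \<Rightarrow> 'a) \<Rightarrow> 'a set" where
  "projections p = range p"

definition least_right_identity_proj ::
  "('a \<Rightarrow> 'a \<Rightarrow> 'a) \<Rightarrow> ('a \<Rightarrow> 'a) \<Rightarrow> 'a \<Rightarrow> 'a \<Rightarrow> bool" where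
  "least_right_identity_proj m p a u \<longleftrightarrow>
     u \<in> projections p \<and> m a u = a \<and>
     (\<forall>f \<in> projections p. m a f = a \<longrightarrow> m u f = u)"

end

theory Submission
  imports Defs
begin

fun isp :: "'x trm \<Rightarrow> bool" where
  "isp (Var x) = False"
| "isp One = True"
| "isp (Plus t) = True"
| "isp (Mul t u) = (isp t \<and> isp u)"

fun st :: "'x trm \<Rightarrow> 'x trm" where
  "st (Var x) = One"
| "st One = One"
| "st (Plus t) = Plus t"
| "st (Mul t u) = (if isp u then Mul (st t) u else st u)"

lemma isp_resp: "leq a b \<Longrightarrow> isp a = isp b"
  by (induction rule: leq.induct) auto

lemma plus_one: "leq (Plus One) One"
  by (meson leq.ax1 leq.runit leq.sym leq.trans)

lemma plus_plus: "leq (Plus (Plus t)) (Plus t)"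
proof -
  have "leq (Plus (Mul (Plus t) (Plus One))) (Mul (Plus t) (Plus One))" by (rule leq.ax2)
  moreover have "leq (Mul (Plus t) (Plus One)) (Plus t)"
    by (meson leq.cong_mul leq.refl leq.runit leq.trans plus_one)
  ultimately show ?thesis
    by (meson leq.cong_plus leq.sym leq.trans)
qed

lemma plus_idem: "leq (Mul (Plus t) (Plus t)) (Plus t)"
  by (meson leq.ax1 leq.cong_mul leq.refl leq.sym leq.trans plus_plus)

lemma isp_plus: "isp t \<Longrightarrow> leq t (Plus t)"
proof (induction t)
  case One then show ?case using plus_one leq.sym by blast
next
  case (Plus t) then show ?case using plus_plus leq.sym by blast
next
  case (Mul t u)
  then have a: "leq (Mul t u) (Mul (Plus t) (Plus u))" by (simp add: leq.cong_mul)
  have "leq (Plus (Mul t u)) (Plus (Mul (Plus t) (Plus u)))" using a by (rule leq.cong_plus)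
  then show ?case using a leq.ax2 by (meson leq.sym leq.trans)
qed simp

lemma st_isp: "isp (st t)"
  by (induction t) auto

lemma isp_st: "isp t \<Longrightarrow> leq (st t) t"
  by (induction t) (auto intro: leq.intros)

lemma proj_comm: "isp a \<Longrightarrow> isp b \<Longrightarrow> leq (Mul a b) (Mul b a)"
  by (meson isp_plus leq.ax3 leq.cong_mul leq.sym leq.trans)

lemma proj_idem: "isp a \<Longrightarrow> leq (Mul a a) a"
  by (meson isp_plus leq.cong_mul leq.sym leq.trans plus_idem)

lemma st_resp: "leq a b \<Longrightarrow> leq (st a) (st b)"
proof (induction rule: leq.induct)
  case (refl t) then show ?case by (rule leq.refl)
next
  case (sym s t) show ?case by (rule leq.sym[OF sym.IH])
next
  case (trans s t u) show ?case by (rule leq.trans[OF trans.IH])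
next
  case (cong_mul s s' t t')
  then have "isp t = isp t'" using isp_resp by blast
  then show ?case using cong_mul by (auto intro: leq.intros)
next
  case (cong_plus s s') then show ?case by (simp add: leq.cong_plus)
next
  case (assoc x y z) then show ?case by (auto intro: leq.intros)
next
  case (lunit x) then show ?case
    using isp_st by (auto intro: leq.intros)
next
  case (runit x) then show ?case by (auto intro: leq.intros)
next
  case (ax1 x) then show ?case
    using isp_st by (auto intro: leq.intros)
next
  case (ax2 x y) then show ?case by (auto intro: leq.intros)
next
  case (ax3 x y) then show ?case by (auto intro: leq.intros)
next
  case (ax4 x y) then show ?case by (auto intro: leq.intros)
qed

lemma mul_st: "leq (Mul t (st t)) t"
proof (induction t)
  case (Mul t u)
  show ?case
  proof (cases "isp u")
    case True
    have "leq (Mul (Mul t u) (Mul (st t) u)) (Mul (Mul t (st t)) (Mul u u))"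
    proof -
      have "leq (Mul (Mul t u) (Mul (st t) u)) (Mul t (Mul u (Mul (st t) u)))" by (rule leq.assoc)
      moreover have "leq (Mul u (Mul (st t) u)) (Mul (Mul u (st t)) u)" by (rule leq.sym, rule leq.assoc)
      moreover have "leq (Mul (Mul u (st t)) u) (Mul (Mul (st t) u) u)"
        using proj_comm[OF True st_isp] by (simp add: leq.cong_mul leq.refl)
      moreover have "leq (Mul (Mul (st t) u) u) (Mul (st t) (Mul u u))" by (rule leq.assoc)
      moreover have "leq (Mul t (Mul (st t) (Mul u u))) (Mul (Mul t (st t)) (Mul u u))" by (rule leq.sym, rule leq.assoc)
      ultimately show ?thesis by (meson leq.cong_mul leq.refl leq.trans)
    qed
    moreover have "leq (Mul (Mul t (st t)) (Mul u u)) (Mul t u)"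
      using Mul.IH(1) proj_idem[OF True] by (rule leq.cong_mul)
    ultimately show ?thesis using True by (simp, meson leq.trans)
  next
    case False
    then show ?thesis using Mul.IH(2) by (simp, meson leq.assoc leq.cong_mul leq.refl leq.trans)
  qed
qed (auto intro: leq.intros plus_idem)

lift_definition fle_star :: "'x fle \<Rightarrow> 'x fle" is st by (rule st_resp)

lemma le_fle: "left_ehresmann fle_mul fle_one fle_plus"
  unfolding left_ehresmann_def
  by transfer (auto intro: leq.intros)

theorem mainTheorem3:
  "\<exists>s :: 'x fle \<Rightarrow> 'x fle.
     star_left_ehresmann fle_mul fle_one fle_plus s \<and>
     (\<forall>a. least_right_identity_proj fle_mul fle_plus a (s a))"
proof (intro exI conjI allI)
  have a1: "\<And>x. fle_mul x (fle_star x) = x" by transfer (rule mul_st)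
  have a2: "\<And>x. fle_star (fle_star x) = fle_star x" by transfer (rule isp_st[OF st_isp])
  have a3: "\<And>x y. fle_mul (fle_star x) (fle_star y) = fle_mul (fle_star y) (fle_star x)"
    by transfer (rule proj_comm[OF st_isp st_isp])
  have a4: "\<And>x y. fle_mul (fle_star (fle_mul x (fle_star y))) (fle_star y) = fle_star (fle_mul x (fle_star y))"
    by transfer (simp add: st_isp, meson leq.assoc leq.cong_mul leq.refl leq.trans proj_idem st_isp)
  have a5: "\<And>x. fle_plus (fle_star x) = fle_star x" by transfer (rule leq.sym, rule isp_plus[OF st_isp])
  have a6: "\<And>x. fle_star (fle_plus x) = fle_plus x" by transfer (simp only: st.simps, rule leq.refl)
  show "star_left_ehresmann fle_mul fle_one fle_plus fle_star"
    unfolding star_left_ehresmann_def using le_fle a1 a2 a3 a4 a5 a6 by blast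
  fix a :: "'x fle"
  have r: "fle_mul (fle_star a) (fle_plus g) = fle_star a" if "fle_mul a (fle_plus g) = a" for g
    using that by transfer (drule st_resp, simp)
  have p: "fle_star a \<in> range fle_plus" using a5 by (metis rangeI)
  show "least_right_identity_proj fle_mul fle_plus a (fle_star a)"
    unfolding least_right_identity_proj_def projections_def
  proof (intro conjI ballI impI)
    fix f assume "f \<in> range fle_plus" "fle_mul a f = a"
    then show "fle_mul (fle_star a) f = fle_star a" using r by blast
  qed (use p a1 in auto)
qed

end
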